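(* Let $s$ be a positive integer, $S$ a linear subspace of $\mathbb{R}^s$, $b\in\mathbb{R}^s_{>0}$, and $z\in S+b$ with $z\in\mathbb{R}^s_{\ge0}$. Let $\alpha\in\{0,1\}^s$ be given by $\alpha_i=1$ if $z_i>0$ and $\alpha_i=0$ otherwise. Then $(\alpha+S)\cap\mathbb{R}^s_{\ge0}$ intersects $\mathbb{R}^s_{>0}$. *)

theory Defs
  imports "HOL-Analysis.Analysis"
begin

end

theory Submission
  imports Defs
begin

theorem lemma4p5:
  fixes S :: "(real ^ 'n) set" and b z :: "real ^ 'n"
  assumes "subspace S"
    and "\<forall>i. 0 < b $ i"
    and "z \<in> (\<lambda>v. v + b) ` S"
    and "\<forall>i. 0 \<le> z $ i"
  defines "\<alpha> \<equiv> (\<chi> i. if 0 < z $ i then (1::real) else 0)"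
  shows "((\<lambda>v. \<alpha> + v) ` S) \<inter> {x. \<forall>i. 0 \<le> x $ i} \<inter> {x. \<forall>i. 0 < x $ i} \<noteq> {}"
proof -
  obtain v where v: "v \<in> S" "z = v + b" using assms(3) by auto
  define s where "s = (\<Sum>i\<in>UNIV. z $ i)"
  define t where "t = 1 / (1 + s)"
  have s0: "s \<ge> 0" unfolding s_def using assms(4) by (simp add: sum_nonneg)
  have zs: "z $ i \<le> s" for i unfolding s_def
    using assms(4) by (intro member_le_sum) auto
  have t0: "t > 0" using s0 unfolding t_def by simp
  have tz: "t * z $ i < 1" for i
  proof -
    have "t * z $ i \<le> t * s" using zs t0 by (simp add: mult_left_mono)
    also have "\<dots> < 1" using s0 unfolding t_def by (simp add: field_simps)
    finally show ?thesis .
  qed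
  define w where "w = (- t) *\<^sub>R v"
  have wS: "w \<in> S" unfolding w_def using v(1) assms(1) by (simp add: subspace_scale subspace_neg)
  have pos: "0 < (\<alpha> + w) $ i" for i
  proof -
    have wi: "w $ i = t * b $ i - t * z $ i" unfolding w_def using v(2)
      by (simp add: algebra_simps)
    have tb: "t * b $ i > 0" using t0 assms(2) by simp
    show ?thesis
    proof (cases "0 < z $ i")
      case True
      then show ?thesis using wi tb tz[of i] unfolding \<alpha>_def by simp
    next
      case False
      then have "z $ i = 0" using assms(4) by (meson antisym not_less)
      then show ?thesis using wi tb unfolding \<alpha>_def by simp
    qed
  qed
  have "\<alpha> + w \<in> ((\<lambda>v. \<alpha> + v) ` S) \<inter> {x. \<forall>i. 0 \<le> x $ i} \<inter> {x. \<forall>i. 0 < x $ i}"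
    using wS pos less_imp_le by blast
  then show ?thesis by blast
qed

end
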